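(* For every prime power $q$, all integers $n$, $r\le\lfloor n/2\rfloor$ and $0<\rho<r$, $$K_{\mathrm{C}}(q,n,r,\rho)\le\binom{n}{r}K_{\mathrm{R}}(q^{n-r},r,\rho).$$
   Context: $E_r(q,n)$ is the set of $r$-dimensional subspaces of $\mathrm{GF}(q)^n$ with injection distance $d_{\mathrm{I}}(U,V)=\dim(U+V)-\min\{\dim U,\dim V\}$; the covering radius of a nonempty $\mathcal{C}\subseteq E_r(q,n)$ is $\max_U\min_{C\in\mathcal{C}}d_{\mathrm{I}}(U,C)$, and $K_{\mathrm{C}}(q,n,r,\rho)$ is the minimum cardinality of a subset of $E_r(q,n)$ with covering radius at most $\rho$. The rank distance on $\mathrm{GF}(q)^{m\times N}$ is $d_{\mathrm{R}}({\bf C},{\bf D})=\mathrm{rk}({\bf C}-{\bf D})$; $K_{\mathrm{R}}(q^m,N,\rho)$ is the minimum cardinality of a set $\mathcal{C}\subseteq\mathrm{GF}(q)^{m\times N}$ such that every matrix in $\mathrm{GF}(q)^{m\times N}$ is within rank distance $\rho$ of some element of $\mathcal{C}$. *)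

theory Defs
  imports Complex_Main "HOL-Library.Function_Algebras"
begin

text \<open>Vectors of GF(q)^n are modelled as functions nat => 'a vanishing outside {0..<n},
  where 'a is an arbitrary finite field (so q = CARD('a) ranges over all prime powers).\<close>

definition fscale :: "'a::field \<Rightarrow> (nat \<Rightarrow> 'a) \<Rightarrow> (nat \<Rightarrow> 'a)" where
  "fscale c v = (\<lambda>i. c * v i)"

definition vecs :: "'a::field itself \<Rightarrow> nat \<Rightarrow> (nat \<Rightarrow> 'a) set" where
  "vecs T n = {v. \<forall>i\<ge>n. v i = 0}"

definition vdim :: "(nat \<Rightarrow> 'a::field) set \<Rightarrow> nat" where
  "vdim U = Vector_Spaces.vector_space.dim fscale U"

definition Grass :: "'a::field itself \<Rightarrow> nat \<Rightarrow> nat \<Rightarrow> (nat \<Rightarrow> 'a) set set" where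
  "Grass T n r = {U. U \<subseteq> vecs T n \<and> Modules.module.subspace fscale U \<and> vdim U = r}"

definition subsum :: "(nat \<Rightarrow> 'a::field) set \<Rightarrow> (nat \<Rightarrow> 'a) set \<Rightarrow> (nat \<Rightarrow> 'a) set" where
  "subsum U V = {u + v | u v. u \<in> U \<and> v \<in> V}"

definition dI :: "(nat \<Rightarrow> 'a::field) set \<Rightarrow> (nat \<Rightarrow> 'a) set \<Rightarrow> nat" where
  "dI U V = vdim (subsum U V) - min (vdim U) (vdim V)"

definition covering_radius_sub ::
  "'a::field itself \<Rightarrow> nat \<Rightarrow> nat \<Rightarrow> (nat \<Rightarrow> 'a) set set \<Rightarrow> nat" where
  "covering_radius_sub T n r C = Max ((\<lambda>U. Min ((\<lambda>c. dI U c) ` C)) ` Grass T n r)"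

definition K_C :: "'a::field itself \<Rightarrow> nat \<Rightarrow> nat \<Rightarrow> nat \<Rightarrow> nat" where
  "K_C T n r \<rho> = Inf {card C | C. C \<subseteq> Grass T n r \<and> C \<noteq> {} \<and>
      covering_radius_sub T n r C \<le> \<rho>}"

definition mats :: "'a::field itself \<Rightarrow> nat \<Rightarrow> nat \<Rightarrow> (nat \<Rightarrow> nat \<Rightarrow> 'a) set" where
  "mats T m N = {M. \<forall>i j. (m \<le> i \<or> N \<le> j) \<longrightarrow> M i j = 0}"

definition mrank :: "nat \<Rightarrow> (nat \<Rightarrow> nat \<Rightarrow> 'a::field) \<Rightarrow> nat" where
  "mrank N M = vdim ((\<lambda>j. \<lambda>i. M i j) ` {..<N})"

definition dR :: "nat \<Rightarrow> (nat \<Rightarrow> nat \<Rightarrow> 'a::field) \<Rightarrow> (nat \<Rightarrow> nat \<Rightarrow> 'a) \<Rightarrow> nat" where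
  "dR N C D = mrank N (C - D)"

definition K_R :: "'a::field itself \<Rightarrow> nat \<Rightarrow> nat \<Rightarrow> nat \<Rightarrow> nat" where
  "K_R T m N \<rho> = Inf {card C | C. C \<subseteq> mats T m N \<and>
      (\<forall>M\<in>mats T m N. \<exists>D\<in>C. dR N M D \<le> \<rho>)}"

end

theory Submission
  imports Defs
begin

interpretation fv: vector_space "fscale :: 'a::field \<Rightarrow> (nat \<Rightarrow> 'a) \<Rightarrow> (nat \<Rightarrow> 'a)"
  by unfold_locales (auto simp: fscale_def fun_eq_iff algebra_simps)

lemma sum_fun_apply: "(sum f A) x = (\<Sum>a\<in>A. f a x)"
  by (induction A rule: infinite_finite_induct) auto

lemma fscale_apply[simp]: "fscale c v i = c * v i"
  by (simp add: fscale_def)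

lemma finite_vecs: "finite (vecs TYPE('a::{finite,field}) n)"
proof -
  have "vecs TYPE('a) n = {f. \<forall>x. (x \<in> {..<n} \<longrightarrow> f x \<in> (UNIV::'a set)) \<and> (x \<notin> {..<n} \<longrightarrow> f x = 0)}"
    by (auto simp: vecs_def)
  then show ?thesis using finite_set_of_finite_funs[of "{..<n}" "UNIV::'a set" 0] by simp
qed

lemma subspace_vecs: "fv.subspace (vecs TYPE('a::field) n)"
  by (auto simp: fv.subspace_def vecs_def)

definition ee :: "nat \<Rightarrow> nat \<Rightarrow> 'a::field" where
  "ee i = (\<lambda>j. if j = i then 1 else 0)"

lemma vecs_span_ee:
  assumes "v \<in> vecs TYPE('a::field) n"
  shows "v \<in> fv.span ((ee :: nat \<Rightarrow> nat \<Rightarrow> 'a) ` {..<n})"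
proof -
  have "v = (\<Sum>i<n. fscale (v i) (ee i))"
    using assms by (auto simp: fun_eq_iff sum_fun_apply ee_def vecs_def if_distrib cong: if_cong)
  also have "\<dots> \<in> fv.span ((ee :: nat \<Rightarrow> nat \<Rightarrow> 'a) ` {..<n})"
    by (intro fv.span_sum fv.span_scale fv.span_base) auto
  finally show ?thesis .
qed

lemma ee_inj: "inj (ee :: nat \<Rightarrow> nat \<Rightarrow> 'a::field)"
  by (auto simp: inj_def ee_def fun_eq_iff)

lemma ee_indep: "fv.independent ((ee :: nat \<Rightarrow> nat \<Rightarrow> 'a::field) ` {..<n})"
proof (rule fv.independent_if_scalars_zero)
  show "finite ((ee :: nat \<Rightarrow> nat \<Rightarrow> 'a::field) ` {..<n})" by simp
next
  fix f :: "(nat \<Rightarrow> 'a) \<Rightarrow> 'a" and x :: "nat \<Rightarrow> 'a"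
  assume s: "(\<Sum>x\<in>ee ` {..<n}. fscale (f x) x) = 0" and x: "x \<in> ee ` {..<n}"
  then obtain i where i: "i < n" "x = ee i" by auto
  have "0 = (\<Sum>x\<in>(ee :: nat \<Rightarrow> nat \<Rightarrow> 'a) ` {..<n}. fscale (f x) x) i" using s by simp
  also have "\<dots> = (\<Sum>k<n. f (ee k) * (ee :: nat \<Rightarrow> nat \<Rightarrow> 'a) k i)"
    by (simp add: sum_fun_apply sum.reindex inj_on_subset[OF ee_inj])
  also have "\<dots> = (\<Sum>k<n. if k = i then f (ee k) else 0)"
    by (intro sum.cong) (auto simp: ee_def)
  also have "\<dots> = f x" using i by simp
  finally show "f x = 0" by simp
qed

lemma dim_vecs: "fv.dim (vecs TYPE('a::field) n) = n"
proof (rule fv.dim_unique[of "(ee :: nat \<Rightarrow> nat \<Rightarrow> 'a) ` {..<n}"])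
  show "ee ` {..<n} \<subseteq> vecs TYPE('a) n" by (auto simp: ee_def vecs_def)
  show "vecs TYPE('a) n \<subseteq> fv.span (ee ` {..<n})" using vecs_span_ee by blast
  show "fv.independent ((ee :: nat \<Rightarrow> nat \<Rightarrow> 'a) ` {..<n})" by (rule ee_indep)
  show "card ((ee :: nat \<Rightarrow> nat \<Rightarrow> 'a) ` {..<n}) = n"
    by (simp add: card_image inj_on_subset[OF ee_inj])
qed

lemma extract_S:
  assumes U: "U \<in> Grass TYPE('a::{finite,field}) n r"
  shows "\<exists>S. S \<subseteq> {0..<n} \<and> card S = r \<and>
    (\<forall>i\<in>S. \<exists>x\<in>U. \<forall>j. j \<notin> {0..<n} - S \<longrightarrow> x j = ee i j)"
proof -
  have Usub: "U \<subseteq> vecs TYPE('a) n" and Us: "fv.subspace U" and Ud: "fv.dim U = r"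
    using U by (auto simp: Grass_def vdim_def)
  obtain B where B: "B \<subseteq> U" "fv.independent B" "U \<subseteq> fv.span B" "card B = fv.dim U"
    by (rule fv.basis_exists[of U])
  have finB: "finite B" using B(1) Usub by (meson finite_subset finite_vecs subset_trans)
  define E where "E = (ee :: nat \<Rightarrow> nat \<Rightarrow> 'a) ` {..<n}"
  obtain B' where B': "B \<subseteq> B'" "B' \<subseteq> B \<union> E" "fv.independent B'" "B \<union> E \<subseteq> fv.span B'"
    using fv.maximal_independent_subset_extend[of B "B \<union> E"] B(2) by blast
  have E_vecs: "E \<subseteq> vecs TYPE('a) n" by (auto simp: E_def ee_def vecs_def)
  have "vecs TYPE('a) n \<subseteq> fv.span E" using vecs_span_ee E_def by blast
  also have "fv.span E \<subseteq> fv.span B'"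
    using B'(4) by (intro fv.span_minimal) auto
  finally have vB': "vecs TYPE('a) n \<subseteq> fv.span B'" .
  have "B' \<subseteq> vecs TYPE('a) n" using B'(2) B(1) Usub E_vecs by blast
  then have cB': "card B' = n"
    using fv.basis_card_eq_dim[OF _ vB' B'(3)] dim_vecs by simp
  define T where "T = {i. i < n \<and> ee i \<in> B' - B}"
  have eT: "(ee :: nat \<Rightarrow> nat \<Rightarrow> 'a) ` T = B' - B"
    using B'(2) by (auto simp: T_def E_def)
  have finB': "finite B'" using \<open>B' \<subseteq> vecs TYPE('a) n\<close> by (meson finite_subset finite_vecs)
  have "card (B' - B) = n - r" using card_Diff_subset[OF finB B'(1)] cB' B(4) Ud by simp
  moreover have "card ((ee :: nat \<Rightarrow> nat \<Rightarrow> 'a) ` T) = card T"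
    using card_image[OF inj_on_subset[OF ee_inj, of T]] by simp
  ultimately have cT: "card T = n - r" using eT by simp
  have rn: "r \<le> n" using card_mono[OF finB' B'(1)] cB' B(4) Ud by simp
  define S where "S = {0..<n} - T"
  have TS: "{0..<n} - S = T" by (auto simp: S_def T_def)
  have Tsub: "T \<subseteq> {0..<n}" by (auto simp: T_def)
  have cS: "card S = r" unfolding S_def
    using card_Diff_subset[OF finite_subset[OF Tsub] Tsub] cT rn by simp
  have spU: "fv.span B = U" using fv.span_subspace[OF B(1) B(3) Us] .
  have "\<exists>x\<in>U. \<forall>j. j \<notin> {0..<n} - S \<longrightarrow> x j = ee i j" if i: "i \<in> S" for i
  proof -
    have "ee i \<in> E" using i by (auto simp: S_def E_def)
    have BB: "B \<union> (B' - B) = B'" using B'(1) by blast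
    have "ee i \<in> fv.span B'" using B'(4) \<open>ee i \<in> E\<close> by blast
    then have "ee i \<in> fv.span (B \<union> (B' - B))" unfolding BB .
    then obtain x y where xy: "ee i = x + y" "x \<in> fv.span B" "y \<in> fv.span (B' - B)"
      unfolding fv.span_Un by blast
    have "fv.span (B' - B) \<subseteq> {v. \<forall>j. j \<notin> T \<longrightarrow> v j = 0}"
      unfolding eT[symmetric]
      by (intro fv.span_minimal) (auto simp: fv.subspace_def ee_def)
    then have "\<forall>j. j \<notin> T \<longrightarrow> y j = 0" using xy(3) by blast
    then have "\<forall>j. j \<notin> T \<longrightarrow> x j = ee i j" using xy(1) by (auto simp: fun_eq_iff)
    then show ?thesis using xy(2) spU TS by auto
  qed
  then show ?thesis using cS by (auto simp: S_def intro!: exI[of _ S])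
qed

definition vv :: "nat \<Rightarrow> nat set \<Rightarrow> (nat \<Rightarrow> nat) \<Rightarrow> (nat \<Rightarrow> nat) \<Rightarrow> (nat \<Rightarrow> nat \<Rightarrow> 'a::field) \<Rightarrow> nat \<Rightarrow> (nat \<Rightarrow> 'a)" where
  "vv n S s ti D j = (\<lambda>i. if i \<in> S then (if i = s j then 1 else 0) else if i < n then D (ti i) j else 0)"

definition Vsp :: "nat \<Rightarrow> nat \<Rightarrow> nat set \<Rightarrow> (nat \<Rightarrow> nat) \<Rightarrow> (nat \<Rightarrow> nat) \<Rightarrow> (nat \<Rightarrow> nat \<Rightarrow> 'a::field) \<Rightarrow> (nat \<Rightarrow> 'a) set" where
  "Vsp n r S s ti D = fv.span (vv n S s ti D ` {..<r})"

lemma Vsp_Grass: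
  assumes S: "S \<subseteq> {0..<n}" and s: "bij_betw s {..<r} S"
  shows "Vsp n r S s ti (D :: nat \<Rightarrow> nat \<Rightarrow> 'a::field) \<in> Grass TYPE('a) n r"
proof -
  let ?A = "vv n S s ti D ` {..<r}"
  have sS: "s j \<in> S" if "j < r" for j using s that by (auto simp: bij_betw_def)
  have sinj: "s j = s k \<Longrightarrow> j < r \<Longrightarrow> k < r \<Longrightarrow> j = k" for j k
    using s by (auto simp: bij_betw_def inj_on_def)
  have ev: "vv n S s ti D j (s k) = (if j = k then 1 else 0)" if "j < r" "k < r" for j k
    using sS[OF that(2)] sinj[OF _ that(2) that(1)] by (auto simp: vv_def)
  have inj: "inj_on (vv n S s ti D) {..<r}"
  proof (rule inj_onI)
    fix j k assume "j \<in> {..<r}" "k \<in> {..<r}" "vv n S s ti D j = vv n S s ti D k"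
    then have "vv n S s ti D j (s j) = vv n S s ti D k (s j)" by simp
    then show "j = k" using ev \<open>j \<in> {..<r}\<close> \<open>k \<in> {..<r}\<close> by (auto split: if_splits)
  qed
  have indep: "fv.independent ?A"
  proof (rule fv.independent_if_scalars_zero)
    show "finite ?A" by simp
  next
    fix f :: "(nat \<Rightarrow> 'a) \<Rightarrow> 'a" and x :: "nat \<Rightarrow> 'a"
    assume sum0: "(\<Sum>x\<in>?A. fscale (f x) x) = 0" and x: "x \<in> ?A"
    then obtain k where k: "k < r" "x = vv n S s ti D k" by auto
    have "0 = (\<Sum>x\<in>?A. fscale (f x) x) (s k)" using sum0 by simp
    also have "\<dots> = (\<Sum>y\<in>?A. f y * y (s k))" by (simp add: sum_fun_apply)
    also have "\<dots> = (\<Sum>y\<in>?A. if y = x then f y else 0)"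
    proof (rule sum.cong)
      fix y assume "y \<in> ?A"
      then obtain j where j: "j < r" "y = vv n S s ti D j" by auto
      show "f y * y (s k) = (if y = x then f y else 0)"
        using ev[OF j(1) k(1)] j k inj_onD[OF inj, of j k] by auto
    qed simp
    also have "\<dots> = f x" using x by simp
    finally show "f x = 0" by simp
  qed
  have vecsA: "?A \<subseteq> vecs TYPE('a) n" using S by (auto simp: vv_def vecs_def)
  have "fv.span ?A \<subseteq> vecs TYPE('a) n" by (rule fv.span_minimal[OF vecsA subspace_vecs])
  moreover have "fv.dim (fv.span ?A) = r"
    using fv.dim_span_eq_card_independent[OF indep] card_image[OF inj] by simp
  ultimately show ?thesis
    by (simp add: Grass_def Vsp_def vdim_def)
qed

lemma subsum_span:
  assumes "fv.subspace U" "fv.subspace V"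
  shows "subsum U V = fv.span (U \<union> (V :: (nat \<Rightarrow> 'a::field) set))"
  using assms unfolding subsum_def fv.span_Un by (simp add: fv.span_eq_iff[THEN iffD2])

lemma dist_bound:
  fixes U :: "(nat \<Rightarrow> 'a::{finite,field}) set"
  assumes U: "U \<in> Grass TYPE('a) n r"
    and S: "S \<subseteq> {0..<n}" and s: "bij_betw s {..<r} S"
    and t: "bij_betw t {..<n-r} ({0..<n} - S)"
    and ti: "ti = the_inv_into {..<n-r} t"
    and u: "\<And>j. j < r \<Longrightarrow> u j \<in> U \<and> (\<forall>i. i \<notin> {0..<n} - S \<longrightarrow> u j i = (if i = s j then 1 else 0))"
    and A: "A = (\<lambda>k j. if k < n - r \<and> j < r then u j (t k) else 0)"
    and dr: "dR r A D \<le> \<rho>"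
  shows "dI U (Vsp n r S s ti D) \<le> \<rho>"
proof -
  define T where "T = {0..<n} - S"
  define emb :: "(nat \<Rightarrow> 'a) \<Rightarrow> (nat \<Rightarrow> 'a)" where "emb z = (\<lambda>i. if i \<in> T then z (ti i) else 0)" for z
  define col where "col j = (\<lambda>k. (A - D) k j)" for j
  define V where "V = Vsp n r S s ti D"
  have Usub: "U \<subseteq> vecs TYPE('a) n" and Us: "fv.subspace U" and Ud: "fv.dim U = r"
    using U by (auto simp: Grass_def vdim_def)
  have VG: "V \<in> Grass TYPE('a) n r" unfolding V_def by (rule Vsp_Grass[OF S s])
  then have Vs: "fv.subspace V" and Vd: "fv.dim V = r" by (auto simp: Grass_def vdim_def)
  have tiT: "ti i < n - r" "t (ti i) = i" if "i \<in> T" for i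
  proof -
    have "i \<in> {0..<n} - S" using that by (simp add: T_def)
    then show "ti i < n - r" using bij_betwE[OF bij_betw_the_inv_into[OF t]] unfolding ti by blast
    show "t (ti i) = i" using f_the_inv_into_f_bij_betw[OF t] \<open>i \<in> {0..<n} - S\<close> unfolding ti by blast
  qed
  have vv_eq: "vv n S s ti D j = u j - emb (col j)" if j: "j < r" for j
  proof
    fix i
    show "vv n S s ti D j i = (u j - emb (col j)) i"
    proof (cases "i \<in> T")
      case True
      then show ?thesis using tiT[OF True] j
        by (auto simp: vv_def emb_def col_def A T_def)
    next
      case False
      have "u j i = (if i = s j then 1 else 0)" using u[OF j] False by (auto simp: T_def)
      moreover have "u j \<in> vecs TYPE('a) n" using u[OF j] Usub by blast
      then have "i \<notin> S \<Longrightarrow> u j i = 0" using False S by (auto simp: T_def vecs_def)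
      ultimately show ?thesis using False by (auto simp: vv_def emb_def T_def)
    qed
  qed
  define X where "X = col ` {..<r}"
  have dX: "fv.dim X \<le> \<rho>" using dr by (simp add: dR_def mrank_def vdim_def X_def col_def)
  obtain Bc where Bc: "Bc \<subseteq> X" "fv.independent Bc" "X \<subseteq> fv.span Bc" "card Bc = fv.dim X"
    by (rule fv.basis_exists)
  have finBc: "finite Bc" using Bc(1) finite_subset unfolding X_def by blast
  have emb_span: "emb x \<in> fv.span (emb ` Bc)" if "x \<in> fv.span Bc" for x
  proof -
    have "fv.subspace {x. emb x \<in> fv.span (emb ` Bc)}"
    proof (rule fv.subspaceI)
      show "0 \<in> {x. emb x \<in> fv.span (emb ` Bc)}"
        by (simp add: emb_def fv.span_zero[unfolded zero_fun_def] zero_fun_def)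
    next
      fix x y assume "x \<in> {x. emb x \<in> fv.span (emb ` Bc)}" "y \<in> {x. emb x \<in> fv.span (emb ` Bc)}"
      moreover have "emb (x + y) = emb x + emb y" by (auto simp: emb_def fun_eq_iff)
      ultimately show "x + y \<in> {x. emb x \<in> fv.span (emb ` Bc)}" by (simp add: fv.span_add)
    next
      fix c x assume "x \<in> {x. emb x \<in> fv.span (emb ` Bc)}"
      moreover have "emb (fscale c x) = fscale c (emb x)" by (auto simp: emb_def fun_eq_iff)
      ultimately show "fscale c x \<in> {x. emb x \<in> fv.span (emb ` Bc)}" by (simp add: fv.span_scale)
    qed
    then have "fv.span Bc \<subseteq> {x. emb x \<in> fv.span (emb ` Bc)}"
      by (intro fv.span_minimal) (auto intro: fv.span_base)
    then show ?thesis using that by blast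
  qed
  obtain B where B: "B \<subseteq> U" "fv.independent B" "U \<subseteq> fv.span B" "card B = fv.dim U"
    by (rule fv.basis_exists)
  have finB: "finite B" using B(1) Usub by (meson finite_subset finite_vecs subset_trans)
  define W where "W = B \<union> emb ` Bc"
  have UW: "U \<subseteq> fv.span W" using B(3) fv.span_mono[of B W] by (auto simp: W_def)
  have "vv n S s ti D j \<in> fv.span W" if j: "j < r" for j
  proof -
    have "u j \<in> fv.span W" using u[OF j] UW by blast
    moreover have "col j \<in> fv.span Bc" using Bc(3) j by (auto simp: X_def)
    then have "emb (col j) \<in> fv.span W"
      using emb_span fv.span_mono[of "emb ` Bc" W] by (auto simp: W_def)
    ultimately show ?thesis using vv_eq[OF j] by (simp add: fv.span_diff)
  qed
  then have VW: "V \<subseteq> fv.span W" unfolding V_def Vsp_def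
    by (intro fv.span_minimal) auto
  have "fv.dim (U \<union> V) \<le> card W"
    using fv.dim_le_card[of "U \<union> V" W] UW VW finB finBc by (auto simp: W_def)
  also have "card W \<le> card B + card (emb ` Bc)" unfolding W_def by (rule card_Un_le)
  also have "\<dots> \<le> r + \<rho>" using B(4) Ud card_image_le[OF finBc, of emb] Bc(4) dX by simp
  finally have "fv.dim (U \<union> V) \<le> r + \<rho>" .
  then show ?thesis
    using Ud Vd subsum_span[OF Us Vs]
    by (simp add: dI_def vdim_def V_def[symmetric])
qed

lemma finite_mats: "finite (mats TYPE('a::{finite,field}) m N)"
proof -
  have "mats TYPE('a) m N \<subseteq> {f. \<forall>x. (x \<in> {..<m} \<longrightarrow> f x \<in> vecs TYPE('a) N) \<and> (x \<notin> {..<m} \<longrightarrow> f x = 0)}"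
    by (auto simp: mats_def vecs_def fun_eq_iff)
  then show ?thesis
    using finite_set_of_finite_funs[of "{..<m}" "vecs TYPE('a) N" 0] finite_vecs
    by (meson finite_lessThan finite_subset)
qed

theorem proposition12:
  fixes n r \<rho> :: nat
  assumes "r \<le> n div 2" and "0 < \<rho>" and "\<rho> < r"
  shows "K_C TYPE('a::{finite,field}) n r \<rho> \<le> (n choose r) * K_R TYPE('a) (n - r) r \<rho>"
proof -
  have rn: "r \<le> n" using assms(1) by simp
  define KS where "KS = {card C | C. C \<subseteq> mats TYPE('a) (n - r) r \<and>
      (\<forall>M\<in>mats TYPE('a) (n - r) r. \<exists>D\<in>C. dR r M D \<le> \<rho>)}"
  have "card (mats TYPE('a) (n - r) r) \<in> KS"
  proof -
    have "dR r M M \<le> \<rho>" for M :: "nat \<Rightarrow> nat \<Rightarrow> 'a"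
    proof -
      have "(\<lambda>j i. (M - M) i j) ` {..<r} \<subseteq> fv.span {}"
        by (auto simp: fv.span_empty fun_eq_iff)
      from fv.dim_le_card[OF this] show ?thesis by (simp add: dR_def mrank_def vdim_def)
    qed
    then show ?thesis unfolding KS_def by blast
  qed
  then have "KS \<noteq> {}" by blast
  then have "Inf KS \<in> KS" by (rule Inf_nat_def1)
  then obtain CR where CR: "CR \<subseteq> mats TYPE('a) (n - r) r"
      "\<forall>M\<in>mats TYPE('a) (n - r) r. \<exists>D\<in>CR. dR r M D \<le> \<rho>"
      "card CR = K_R TYPE('a) (n - r) r \<rho>"
    unfolding KS_def K_R_def by auto
  have finCR: "finite CR" using CR(1) finite_mats finite_subset by blast
  define Subs where "Subs = {S. S \<subseteq> {0..<n} \<and> card S = r}"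
  have cSubs: "card Subs = n choose r" unfolding Subs_def using n_subsets[of "{0..<n}" r] by simp
  have finSubs: "finite Subs" unfolding Subs_def by simp
  define sp where "sp S = (SOME s. bij_betw s {..<r} S)" for S :: "nat set"
  define tp where "tp S = (SOME t. bij_betw t {..<n-r} ({0..<n} - S))" for S :: "nat set"
  define ti where "ti S = the_inv_into {..<n-r} (tp S)" for S
  have spb: "bij_betw (sp S) {..<r} S" if "S \<in> Subs" for S
  proof -
    have "finite S" "card S = r" using that by (auto simp: Subs_def finite_subset)
    then have "\<exists>s. bij_betw s {..<r} S" using ex_bij_betw_nat_finite[of S] by (auto simp: atLeast0LessThan)
    then show ?thesis unfolding sp_def by (rule someI_ex)
  qed
  have tpb: "bij_betw (tp S) {..<n-r} ({0..<n} - S)" if "S \<in> Subs" for S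
  proof -
    have "card ({0..<n} - S) = n - r" using that card_Diff_subset[of S "{0..<n}"]
      by (auto simp: Subs_def finite_subset)
    then have "\<exists>t. bij_betw t {..<n-r} ({0..<n} - S)"
      using ex_bij_betw_nat_finite[of "{0..<n} - S"] by (auto simp: atLeast0LessThan)
    then show ?thesis unfolding tp_def by (rule someI_ex)
  qed
  define Code where "Code = (\<lambda>(S, D). Vsp n r S (sp S) (ti S) (D :: nat \<Rightarrow> nat \<Rightarrow> 'a)) ` (Subs \<times> CR)"
  have CodeG: "Code \<subseteq> Grass TYPE('a) n r"
  proof
    fix V assume "V \<in> Code"
    then obtain S and D :: "nat \<Rightarrow> nat \<Rightarrow> 'a" where SD: "S \<in> Subs" "V = Vsp n r S (sp S) (ti S) D" unfolding Code_def by auto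
    show "V \<in> Grass TYPE('a) n r" unfolding SD(2)
      by (rule Vsp_Grass) (use SD(1) spb in \<open>auto simp: Subs_def\<close>)
  qed
  have cCode: "card Code \<le> (n choose r) * K_R TYPE('a) (n - r) r \<rho>"
  proof -
    have "card Code \<le> card (Subs \<times> CR)" unfolding Code_def
      by (rule card_image_le) (simp add: finSubs finCR)
    then show ?thesis using cSubs CR(3) by (simp add: card_cartesian_product)
  qed
  have cover: "\<exists>c\<in>Code. dI U c \<le> \<rho>" if U: "U \<in> Grass TYPE('a) n r" for U
  proof -
    obtain S where S: "S \<subseteq> {0..<n}" "card S = r"
      "\<forall>i\<in>S. \<exists>x\<in>U. \<forall>j. j \<notin> {0..<n} - S \<longrightarrow> x j = ee i j"
      using extract_S[OF U] by blast
    have SS: "S \<in> Subs" using S by (simp add: Subs_def)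
    obtain g where g: "\<forall>i\<in>S. g i \<in> U \<and> (\<forall>j. j \<notin> {0..<n} - S \<longrightarrow> g i j = ee i j)"
      using S(3) by metis
    define u where "u j = g (sp S j)" for j
    define A :: "nat \<Rightarrow> nat \<Rightarrow> 'a" where "A = (\<lambda>k j. if k < n - r \<and> j < r then u j (tp S k) else 0)"
    have "A \<in> mats TYPE('a) (n - r) r" by (auto simp: A_def mats_def)
    then obtain D where D: "D \<in> CR" "dR r A D \<le> \<rho>" using CR(2) by blast
    have uj: "u j \<in> U \<and> (\<forall>i. i \<notin> {0..<n} - S \<longrightarrow> u j i = (if i = sp S j then 1 else 0))"
      if "j < r" for j
    proof -
      have "sp S j \<in> S" using spb[OF SS] that by (auto simp: bij_betw_def)
      then show ?thesis using g by (auto simp: u_def ee_def)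
    qed
    have "dI U (Vsp n r S (sp S) (ti S) D) \<le> \<rho>"
      by (rule dist_bound[OF U S(1) spb[OF SS] tpb[OF SS] ti_def uj A_def D(2)]) 
    moreover have "Vsp n r S (sp S) (ti S) D \<in> Code" using SS D(1) by (auto simp: Code_def)
    ultimately show ?thesis by blast
  qed
  have "{0..<r} \<in> Subs" using rn by (auto simp: Subs_def)
  moreover have "CR \<noteq> {}"
    using CR(2) by (auto simp: mats_def) 
  ultimately have CodeNE: "Code \<noteq> {}" by (auto simp: Code_def)
  have finCode: "finite Code" unfolding Code_def by (simp add: finSubs finCR)
  have finG: "finite (Grass TYPE('a) n r)"
    by (rule finite_subset[of _ "Pow (vecs TYPE('a) n)"]) (auto simp: Grass_def finite_vecs)
  have GNE: "Grass TYPE('a) n r \<noteq> {}" using CodeG CodeNE by blast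
  have "covering_radius_sub TYPE('a) n r Code \<le> \<rho>"
    unfolding covering_radius_sub_def
  proof (subst Max_le_iff)
    show "finite ((\<lambda>U. Min ((\<lambda>c. dI U c) ` Code)) ` Grass TYPE('a) n r)" using finG by simp
    show "(\<lambda>U. Min ((\<lambda>c. dI U c) ` Code)) ` Grass TYPE('a) n r \<noteq> {}" using GNE by simp
    show "\<forall>a\<in>(\<lambda>U. Min ((\<lambda>c. dI U c) ` Code)) ` Grass TYPE('a) n r. a \<le> \<rho>"
    proof
      fix a assume "a \<in> (\<lambda>U. Min ((\<lambda>c. dI U c) ` Code)) ` Grass TYPE('a) n r"
      then obtain U where U: "U \<in> Grass TYPE('a) n r" "a = Min ((\<lambda>c. dI U c) ` Code)" by blast
      show "a \<le> \<rho>" unfolding U(2) using cover[OF U(1)] finCode CodeNE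
        by (subst Min_le_iff) auto
    qed
  qed
  then have "card Code \<in> {card C | C. C \<subseteq> Grass TYPE('a) n r \<and> C \<noteq> {} \<and>
      covering_radius_sub TYPE('a) n r C \<le> \<rho>}" using CodeG CodeNE by blast
  then have "K_C TYPE('a) n r \<rho> \<le> card Code" unfolding K_C_def by (rule cInf_lower) simp
  then show ?thesis using cCode by simp
qed

end
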